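(* Let $K_1,K_2,t$ be positive integers with $K_2<t<K_1K_2$, and put $F=\binom{K_1K_2}{t}$, $Z_1=\binom{K_1K_2-K_2}{t-K_2}$, $Z_2=\binom{K_1K_2-1}{t-1}-\binom{K_1K_2-K_2}{t-K_2}$. Then there exist integer sets $\mathcal{S}_\mathrm{m},\mathcal{S}_1,\ldots,\mathcal{S}_{K_1}$ and a $(K_1,K_2;F;Z_1,Z_2;\mathcal{S}_\mathrm{m},\mathcal{S}_1,\ldots,\mathcal{S}_{K_1})$ HPDA such that $$\Big|\bigcup_{k_1=1}^{K_1}\mathcal{S}_{k_1}\Big|-|\mathcal{S}_\mathrm{m}|=\binom{K_1K_2}{t+1},\qquad |\mathcal{S}_{k_1}|=\binom{K_1K_2}{t+1}-\binom{K_1K_2-K_2}{t+1}+K_2\binom{K_1K_2-K_2}{t-K_2}\ \text{ for all }k_1\in[K_1].$$ Consequently, for every $N\ge K_1K_2$ there is an $F$-division coded caching scheme with uncoded placement for the $(K_1,K_2;M_1,M_2;N)$ hierarchical caching system with $$\frac{M_1}{N}=\frac{\binom{K_1K_2-K_2}{t-K_2}}{\binom{K_1K_2}{t}},\qquad \frac{M_2}{N}=\frac{t}{K_1K_2}-\frac{\binom{K_1K_2-K_2}{t-K_2}}{\binom{K_1K_2}{t}},$$ subpacketization $F=\binom{K_1K_2}{t}$, and loads $$R_1=\frac{K_1K_2-t}{t+1},\qquad R_2=\frac{K_1K_2-t}{t+1}-\frac{\binom{K_1K_2-K_2}{t+1}}{\binom{K_1K_2}{t}}+\frac{K_2\bi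nom{K_1K_2-K_2}{t-K_2}}{\binom{K_1K_2}{t}}.$$
   Context: Notation: $[a]=\{1,\ldots,a\}$, $[a:b]=\{a,\ldots,b\}$; $\binom{n}{m}=0$ when $m>n$. PDA. For positive integers $K,F,Z,S$ and an integer set $\mathcal{S}$ with $|\mathcal{S}|=S$, an $F\times K$ array $\mathbf{Q}=(q_{j,k})$ with entries in $\{*\}\cup\mathcal{S}$ is a $(K,F,Z,S)$ placement delivery array (PDA) (over $\mathcal{S}$; by default $\mathcal{S}=[S]$) if: (C1) the symbol $*$ appears exactly $Z$ times in each column; (C2) each integer of $\mathcal{S}$ occurs at least once in the array; (C3) for two distinct entries $q_{j_1,k_1}=q_{j_2,k_2}=s$ with $s$ an integer, we have $j_1\ne j_2$, $k_1\ne k_2$, and $q_{j_1,k_2}=q_{j_2,k_1}=*$. HPDA. Let $K_1,K_2,F,Z_1,Z_2$ be positive integers with $Z_1<F$, $Z_2<F$, and let $\mathcal{S}_\mathrm{m},\mathcal{S}_1,\ldots,\mathcal{S}_{K_1}$ be sets of integers. An $F\times(K_1+K_1K_2)$ array $\mathbf{P}=(\mathbf{P}^{(0)},\mathbf{P}^{(1)},\ldots,\mathbf{P}^{(K_1)})$, where $\mathbf{P}^{(0)}=(p^{(0)}_{j,k_1})_{j\in[F],k_1\in[K_1]}$ has every entry equal to $*$ or to "null" (blank), and for each $k_1\in[K_1]$, $\mathbf{P}^{(k_1)}=(p^{(k_1)}_{j,k_2})_{j\in[F],k_2\in[K_2]}$ has entries in $\{*\}\cup\mathcal{S}_{k_1}$,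 is a $(K_1,K_2;F;Z_1,Z_2;\mathcal{S}_\mathrm{m},\mathcal{S}_1,\ldots,\mathcal{S}_{K_1})$ hierarchical placement delivery array (HPDA) if: (B1) each column of $\mathbf{P}^{(0)}$ contains exactly $Z_1$ stars; (B2) for each $k_1\in[K_1]$, $\mathbf{P}^{(k_1)}$ is a $(K_2,F,Z_2,|\mathcal{S}_{k_1}|)$ PDA over $\mathcal{S}_{k_1}$; (B3) each integer $s\in\mathcal{S}_\mathrm{m}$ occurs in exactly one of the subarrays $\mathbf{P}^{(1)},\ldots,\mathbf{P}^{(K_1)}$, and whenever $p^{(k_1)}_{j,k_2}=s\in\mathcal{S}_\mathrm{m}$ we have $p^{(0)}_{j,k_1}=*$; (B4) for any $k_1\ne k_1'\in[K_1]$, $j,j'\in[F]$, $k_2,k_2'\in[K_2]$ with $p^{(k_1)}_{j,k_2}=p^{(k_1')}_{j',k_2'}$ an integer: if $p^{(k_1)}_{j',k_2}$ is an integer then $p^{(0)}_{j',k_1}=*$; and if $p^{(k_1')}_{j,k_2'}$ is an integer then $p^{(0)}_{j,k_1'}=*$. Hierarchical caching model $(K_1,K_2;M_1,M_2;N)$. A server stores $N$ independent files $W_1,\ldots,W_N$, each uniformly distributed on $B$ bits. There are $K_1$ mirror sites, each with a cache of $M_1B$ bits, and $K_1K_2$ users $U_{k_1,k_2}$ ($k_1\in[K_1]$, $k_2\in[K_2]$), each with a cache of $M_2B$ bits; user $U_{k_1,k_2}$ is attached to mirror site $k_1$. The server reaches all mirror sites through one error-free broadcast link; mirror site $k_1$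 reaches its $K_2$ attached users through an error-free broadcast link. An $F$-division scheme with uncoded placement ($F\mid B$): each file $W_n$ is split into $F$ packets $W_{n,1},\ldots,W_{n,F}$ of $B/F$ bits. In the placement phase (without knowledge of demands) mirror site $k_1$ stores a set $\mathcal{Z}_{k_1}$ of packets of total size at most $M_1B$ bits and user $U_{k_1,k_2}$ stores a set $\mathcal{Z}_{(k_1,k_2)}$ of packets of total size at most $M_2B$ bits. In the delivery phase, given a demand vector $\mathbf{d}=(d_{k_1,k_2})\in[N]^{K_1K_2}$, the server broadcasts to the mirror sites a message $X$ consisting of $S(\mathbf{d})$ packet-sized symbols, a function of the files and $\mathbf{d}$; each mirror site $k_1$ broadcasts to its attached users a message $X_{k_1}$ of $S_{k_1}(\mathbf{d})$ packet-sized symbols, a function of $X$, $\mathcal{Z}_{k_1}$ and $\mathbf{d}$; each user $U_{k_1,k_2}$ must recover $W_{d_{k_1,k_2}}$ from $X_{k_1}$, $\mathcal{Z}_{(k_1,k_2)}$ and $\mathbf{d}$. The loads are $R_1=\max_{\mathbf{d}}S(\mathbf{d})/F$ and $R_2=\max_{k_1,\mathbf{d}}S_{k_1}(\mathbf{d})/F$. *)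

theory Defs
  imports Complex_Main "HOL-Library.FuncSet"
begin

text \<open>Arrays are represented as functions of 1-based indices. An entry of a PDA
  is of type int option: None represents the star, Some s the integer s.\<close>

definition pda :: "nat \<Rightarrow> nat \<Rightarrow> nat \<Rightarrow> int set \<Rightarrow> (nat \<Rightarrow> nat \<Rightarrow> int option) \<Rightarrow> bool" where
  "pda K F Z S Q \<longleftrightarrow>
     0 < K \<and> 0 < F \<and> finite S \<and> 0 < card S \<and>
     (\<forall>j\<in>{1..F}. \<forall>k\<in>{1..K}. Q j k = None \<or> (\<exists>s\<in>S. Q j k = Some s)) \<and>
     (\<forall>k\<in>{1..K}. card {j\<in>{1..F}. Q j k = None} = Z) \<and>
     (\<forall>s\<in>S. \<exists>j\<in>{1..F}. \<exists>k\<in>{1..K}. Q j k = Some s) \<and>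
     (\<forall>j1\<in>{1..F}. \<forall>k1\<in>{1..K}. \<forall>j2\<in>{1..F}. \<forall>k2\<in>{1..K}. \<forall>s.
        (j1, k1) \<noteq> (j2, k2) \<and> Q j1 k1 = Some s \<and> Q j2 k2 = Some s \<longrightarrow>
        j1 \<noteq> j2 \<and> k1 \<noteq> k2 \<and> Q j1 k2 = None \<and> Q j2 k1 = None)"

text \<open>HPDA. P0 j k1 = True means the entry of P^(0) in row j, column k1 is a star,
  False means it is null. P k1 j k2 is the entry of P^(k1) in row j, column k2.\<close>

definition hpda :: "nat \<Rightarrow> nat \<Rightarrow> nat \<Rightarrow> nat \<Rightarrow> nat \<Rightarrow> int set \<Rightarrow> (nat \<Rightarrow> int set)
     \<Rightarrow> (nat \<Rightarrow> nat \<Rightarrow> bool) \<Rightarrow> (nat \<Rightarrow> nat \<Rightarrow> nat \<Rightarrow> int option) \<Rightarrow> bool" where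
  "hpda K1 K2 F Z1 Z2 Sm S P0 P \<longleftrightarrow>
     0 < K1 \<and> 0 < K2 \<and> 0 < F \<and> 0 < Z1 \<and> Z1 < F \<and> Z2 < F \<and>
     \<comment> \<open>(B1)\<close>
     (\<forall>k1\<in>{1..K1}. card {j\<in>{1..F}. P0 j k1} = Z1) \<and>
     \<comment> \<open>(B2)\<close>
     (\<forall>k1\<in>{1..K1}. pda K2 F Z2 (S k1) (P k1)) \<and>
     \<comment> \<open>(B3)\<close>
     (\<forall>s\<in>Sm. (\<exists>!k1. k1 \<in> {1..K1} \<and> (\<exists>j\<in>{1..F}. \<exists>k2\<in>{1..K2}. P k1 j k2 = Some s)) \<and>
        (\<forall>k1\<in>{1..K1}. \<forall>j\<in>{1..F}. \<forall>k2\<in>{1..K2}. P k1 j k2 = Some s \<longrightarrow> P0 j k1)) \<and>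
     \<comment> \<open>(B4)\<close>
     (\<forall>k1\<in>{1..K1}. \<forall>k1'\<in>{1..K1}. \<forall>j\<in>{1..F}. \<forall>j'\<in>{1..F}. \<forall>k2\<in>{1..K2}. \<forall>k2'\<in>{1..K2}. \<forall>s.
        k1 \<noteq> k1' \<and> P k1 j k2 = Some s \<and> P k1' j' k2' = Some s \<longrightarrow>
        (P k1 j' k2 \<noteq> None \<longrightarrow> P0 j' k1) \<and> (P k1' j k2' \<noteq> None \<longrightarrow> P0 j k1'))"

definition packet :: "nat \<Rightarrow> (nat \<Rightarrow> bool list) \<Rightarrow> nat \<Rightarrow> nat \<Rightarrow> bool list" where
  "packet L W n f = take L (drop ((f - 1) * L) (W n))"

definition cache_of :: "nat \<Rightarrow> (nat \<times> nat) set \<Rightarrow> (nat \<Rightarrow> bool list) \<Rightarrow> (nat \<times> nat \<Rightarrow> bool list)" where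
  "cache_of L Zc W = (\<lambda>(n, f). if (n, f) \<in> Zc then packet L W n f else [])"

definition valid_files :: "nat \<Rightarrow> nat \<Rightarrow> (nat \<Rightarrow> bool list) \<Rightarrow> bool" where
  "valid_files N B W \<longleftrightarrow> (\<forall>n\<in>{1..N}. length (W n) = B)"

definition demands :: "nat \<Rightarrow> nat \<Rightarrow> nat \<Rightarrow> (nat \<times> nat \<Rightarrow> nat) set" where
  "demands K1 K2 N = ({1..K1} \<times> {1..K2}) \<rightarrow>\<^sub>E {1..N}"

text \<open>Zm k1: packets cached at mirror k1; Zu (k1,k2): packets cached at user U_{k1,k2};
  enc d W: server message (list of packet-sized symbols), Sd d its length;
  mir k1 d X C: message of mirror k1 from X and its cache content C, Sk k1 d its length;
  dec (k1,k2) d Y C: decoded file of user U_{k1,k2} from mirror message Y and its cache C.\<close>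

definition hier_scheme ::
  "nat \<Rightarrow> nat \<Rightarrow> real \<Rightarrow> real \<Rightarrow> nat \<Rightarrow> nat \<Rightarrow> nat \<Rightarrow>
   (nat \<Rightarrow> (nat \<times> nat) set) \<Rightarrow> (nat \<times> nat \<Rightarrow> (nat \<times> nat) set) \<Rightarrow>
   ((nat \<times> nat \<Rightarrow> nat) \<Rightarrow> (nat \<Rightarrow> bool list) \<Rightarrow> bool list list) \<Rightarrow> ((nat \<times> nat \<Rightarrow> nat) \<Rightarrow> nat) \<Rightarrow>
   (nat \<Rightarrow> (nat \<times> nat \<Rightarrow> nat) \<Rightarrow> bool list list \<Rightarrow> (nat \<times> nat \<Rightarrow> bool list) \<Rightarrow> bool list list) \<Rightarrow>
   (nat \<Rightarrow> (nat \<times> nat \<Rightarrow> nat) \<Rightarrow> nat) \<Rightarrow>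
   (nat \<times> nat \<Rightarrow> (nat \<times> nat \<Rightarrow> nat) \<Rightarrow> bool list list \<Rightarrow> (nat \<times> nat \<Rightarrow> bool list) \<Rightarrow> bool list) \<Rightarrow>
   real \<Rightarrow> real \<Rightarrow> bool" where
  "hier_scheme K1 K2 M1 M2 N F B Zm Zu enc Sd mir Sk dec R1 R2 \<longleftrightarrow>
     (let L = B div F; D = demands K1 K2 N in
       0 < F \<and> F dvd B \<and>
       (\<forall>k1\<in>{1..K1}. Zm k1 \<subseteq> {1..N} \<times> {1..F} \<and>
          real (card (Zm k1)) * (real B / real F) \<le> M1 * real B) \<and>
       (\<forall>k1\<in>{1..K1}. \<forall>k2\<in>{1..K2}. Zu (k1, k2) \<subseteq> {1..N} \<times> {1..F} \<and>
          real (card (Zu (k1, k2))) * (real B / real F) \<le> M2 * real B) \<and>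
       (\<forall>d\<in>D. \<forall>W. valid_files N B W \<longrightarrow>
          length (enc d W) = Sd d \<and> (\<forall>x\<in>set (enc d W). length x = L)) \<and>
       (\<forall>d\<in>D. \<forall>W. \<forall>k1\<in>{1..K1}. valid_files N B W \<longrightarrow>
          length (mir k1 d (enc d W) (cache_of L (Zm k1) W)) = Sk k1 d \<and>
          (\<forall>x\<in>set (mir k1 d (enc d W) (cache_of L (Zm k1) W)). length x = L)) \<and>
       (\<forall>d\<in>D. \<forall>W. \<forall>k1\<in>{1..K1}. \<forall>k2\<in>{1..K2}. valid_files N B W \<longrightarrow>
          dec (k1, k2) d (mir k1 d (enc d W) (cache_of L (Zm k1) W)) (cache_of L (Zu (k1, k2)) W)
            = W (d (k1, k2))) \<and>
       R1 = Max ((\<lambda>d. real (Sd d) / real F) ` D) \<and>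
       R2 = Max ((\<lambda>(k1, d). real (Sk k1 d) / real F) ` ({1..K1} \<times> D)))"

end

theory Submission
  imports Defs "HOL-Library.Z2" "HOL-Library.Function_Algebras"
begin


lemma super_count:
  assumes "finite U" "S \<subseteq> U" "card S \<le> t"
  shows "card {T. T \<subseteq> U \<and> card T = t \<and> S \<subseteq> T} = (card U - card S) choose (t - card S)"
proof -
  have fS: "finite S" using assms finite_subset by blast
  have eq: "{T. T \<subseteq> U \<and> card T = t \<and> S \<subseteq> T} = (\<lambda>B. B \<union> S) ` {B. B \<subseteq> U - S \<and> card B = t - card S}"
  proof (intro set_eqI iffI)
    fix T assume T: "T \<in> {T. T \<subseteq> U \<and> card T = t \<and> S \<subseteq> T}"
    then have "T = (T - S) \<union> S" "T - S \<subseteq> U - S" by auto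
    moreover have "card (T - S) = t - card S" using T fS card_Diff_subset by force
    ultimately show "T \<in> (\<lambda>B. B \<union> S) ` {B. B \<subseteq> U - S \<and> card B = t - card S}" by blast
  next
    fix T assume "T \<in> (\<lambda>B. B \<union> S) ` {B. B \<subseteq> U - S \<and> card B = t - card S}"
    then obtain B where B: "B \<subseteq> U - S" "card B = t - card S" "T = B \<union> S" by auto
    have "finite B" using B assms finite_subset by (metis finite_Diff)
    then have "card T = t" using B fS assms card_Un_disjoint[of B S] by auto
    then show "T \<in> {T. T \<subseteq> U \<and> card T = t \<and> S \<subseteq> T}" using B assms by auto
  qed
  have inj: "inj_on (\<lambda>B. B \<union> S) {B. B \<subseteq> U - S \<and> card B = t - card S}"
    by (rule inj_onI) blast
  have "card {T. T \<subseteq> U \<and> card T = t \<and> S \<subseteq> T} = card {B. B \<subseteq> U - S \<and> card B = t - card S}"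
    unfolding eq by (rule card_image[OF inj])
  also have "\<dots> = card (U - S) choose (t - card S)" using assms by (simp add: n_subsets)
  also have "card (U - S) = card U - card S" using assms fS card_Diff_subset by auto
  finally show ?thesis .
qed



locale hsetup =
  fixes K1 K2 t :: nat
  assumes K1pos: "0 < K1" and K2pos: "0 < K2" and K2t: "K2 < t" and tK: "t < K1 * K2"
begin

definition "U = {1..K1} \<times> {1..K2}"
definition "G k1 = {k1} \<times> {1..K2}"
definition "Rows = {T. T \<subseteq> U \<and> card T = t}"
definition "Atp = {A. A \<subseteq> U \<and> card A = Suc t}"
definition "Ak k1 = {A \<in> Atp. A \<inter> G k1 \<noteq> {}}"
definition "Bk k1 = G k1 \<times> {T \<in> Rows. G k1 \<subseteq> T}"
definition "Bm = {(u, T). u \<in> U \<and> T \<in> Rows \<and> G (fst u) \<subseteq> T}"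

lemma finU[simp]: "finite U" by (simp add: U_def)
lemma cardU: "card U = K1 * K2" by (simp add: U_def card_cartesian_product)
lemma cardG[simp]: "card (G k1) = K2" by (simp add: G_def card_cartesian_product)
lemma finG[simp]: "finite (G k1)" by (simp add: G_def)
lemma GU: "k1 \<in> {1..K1} \<Longrightarrow> G k1 \<subseteq> U" by (auto simp: G_def U_def)
lemma finRows[simp]: "finite Rows" unfolding Rows_def by (rule finite_subset[of _ "Pow U"]) auto
lemma finAtp[simp]: "finite Atp" unfolding Atp_def by (rule finite_subset[of _ "Pow U"]) auto
lemma cardRows: "card Rows = (K1*K2) choose t" by (simp add: Rows_def n_subsets cardU)
lemma cardAtp: "card Atp = (K1*K2) choose Suc t" by (simp add: Atp_def n_subsets cardU)

lemma Rows_fin: "T \<in> Rows \<Longrightarrow> finite T" unfolding Rows_def using finU finite_subset by blast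

lemma count_sup: "S \<subseteq> U \<Longrightarrow> card S \<le> t \<Longrightarrow> card {T \<in> Rows. S \<subseteq> T} = (K1*K2 - card S) choose (t - card S)"
  using super_count[of U S t] by (simp add: Rows_def cardU conj_assoc)

lemma cardZ1: "k1 \<in> {1..K1} \<Longrightarrow> card {T \<in> Rows. G k1 \<subseteq> T} = (K1*K2 - K2) choose (t - K2)"
  using count_sup[of "G k1"] GU K2t by simp

lemma cardu: "u \<in> U \<Longrightarrow> card {T \<in> Rows. u \<in> T} = (K1*K2 - 1) choose (t - 1)"
  using count_sup[of "{u}"] K2t by simp

lemma Z1_le: assumes "k1 \<in> {1..K1}" "u \<in> G k1"
  shows "(K1*K2 - K2) choose (t - K2) \<le> (K1*K2 - 1) choose (t - 1)"
proof -
  have "card {T \<in> Rows. G k1 \<subseteq> T} \<le> card {T \<in> Rows. u \<in> T}"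
    by (rule card_mono) (use assms in auto)
  moreover have "u \<in> U" using assms GU by blast
  ultimately show ?thesis using cardZ1[OF assms(1)] cardu[of u] by simp
qed

lemma cardZ2: assumes "k1 \<in> {1..K1}" "u \<in> G k1"
  shows "card {T \<in> Rows. u \<in> T \<and> \<not> G k1 \<subseteq> T} = ((K1*K2 - 1) choose (t - 1)) - ((K1*K2 - K2) choose (t - K2))"
proof -
  have "{T \<in> Rows. u \<in> T \<and> \<not> G k1 \<subseteq> T} = {T \<in> Rows. u \<in> T} - {T \<in> Rows. G k1 \<subseteq> T}" by auto
  moreover have "{T \<in> Rows. G k1 \<subseteq> T} \<subseteq> {T \<in> Rows. u \<in> T}" using assms by auto
  moreover have "finite {T \<in> Rows. G k1 \<subseteq> T}" by simp
  moreover have "u \<in> U" using assms GU by blast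
  ultimately have "card {T \<in> Rows. u \<in> T \<and> \<not> G k1 \<subseteq> T} = card {T \<in> Rows. u \<in> T} - card {T \<in> Rows. G k1 \<subseteq> T}"
    by (simp add: card_Diff_subset)
  then show ?thesis using cardZ1[OF assms(1)] cardu[OF \<open>u \<in> U\<close>] by simp
qed

lemma binom_lt: "(K1*K2 - 1) choose (t - 1) < (K1*K2) choose t"
proof -
  have "K1*K2 = Suc (K1*K2 - 1)" "t = Suc (t - 1)" using tK K2t by auto
  then have "(K1*K2) choose t = ((K1*K2 - 1) choose (t - 1)) + ((K1*K2 - 1) choose t)"
    by (metis binomial_Suc_Suc)
  moreover have "0 < (K1*K2 - 1) choose t" using tK by simp
  ultimately show ?thesis by simp
qed

lemma cardAk: assumes "k1 \<in> {1..K1}"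
  shows "card (Ak k1) = ((K1*K2) choose Suc t) - ((K1*K2 - K2) choose Suc t)"
proof -
  define C where "C = {A. A \<subseteq> U - G k1 \<and> card A = Suc t}"
  have e1: "Ak k1 = Atp - C" by (auto simp: Ak_def Atp_def C_def)
  have e2: "C \<subseteq> Atp" by (auto simp: Atp_def C_def)
  have e3: "card C = (K1*K2 - K2) choose Suc t"
    using assms GU cardU unfolding C_def by (simp add: n_subsets card_Diff_subset)
  have "finite C" by (rule finite_subset[OF e2 finAtp])
  then have "card (Ak k1) = card Atp - card C" unfolding e1 using e2 by (simp add: card_Diff_subset)
  then show ?thesis using e3 cardAtp by simp
qed

lemma cardBk: "k1 \<in> {1..K1} \<Longrightarrow> card (Bk k1) = K2 * ((K1*K2 - K2) choose (t - K2))"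
  by (simp add: Bk_def card_cartesian_product cardG cardZ1)

lemma finBk[simp]: "finite (Bk k1)" by (simp add: Bk_def)
lemma finAk[simp]: "finite (Ak k1)" by (simp add: Ak_def)
lemma finBm[simp]: "finite Bm"
  by (rule finite_subset[of _ "U \<times> Rows"]) (auto simp: Bm_def)

lemma Z1pos: "0 < (K1*K2 - K2) choose (t - K2)" using K2t tK by simp

end


lemma bij_count: assumes "bij_betw r I R"
  shows "card {j \<in> I. Q (r j)} = card {T \<in> R. Q T}"
proof -
  have "{T \<in> R. Q T} = r ` {j \<in> I. Q (r j)}" using assms by (auto simp: bij_betw_def)
  moreover have "inj_on r {j \<in> I. Q (r j)}" using assms by (auto simp: bij_betw_def inj_on_def)
  ultimately show ?thesis by (simp add: card_image)
qed

lemma inj_to_int: "finite X \<Longrightarrow> \<exists>g::'a \<Rightarrow> int. inj_on g X"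
proof -
  assume "finite X"
  then obtain h where "bij_betw h X {0..<card X}" using ex_bij_betw_finite_nat by blast
  then have "inj_on (\<lambda>x. int (h x)) X" by (auto simp: bij_betw_def inj_on_def)
  then show ?thesis by blast
qed

context hsetup begin

definition "Lab = Inl ` Atp \<union> Inr ` (U \<times> Rows)"
lemma finLab[simp]: "finite Lab" by (simp add: Lab_def)

lemma ins_Atp: "u \<in> U \<Longrightarrow> T \<in> Rows \<Longrightarrow> u \<notin> T \<Longrightarrow> insert u T \<in> Atp"
proof -
  assume a: "u \<in> U" "T \<in> Rows" "u \<notin> T"
  then have "finite T" by (rule_tac Rows_fin) 
  with a show ?thesis by (simp add: Rows_def Atp_def)
qed

lemma del_Rows: "A \<in> Atp \<Longrightarrow> u \<in> A \<Longrightarrow> A - {u} \<in> Rows"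
  by (auto simp: Rows_def Atp_def)

lemma part1:
  fixes r :: "nat \<Rightarrow> (nat \<times> nat) set"
  assumes r: "bij_betw r {1..(K1*K2) choose t} Rows"
  shows "\<exists>Sm S P0 P. hpda K1 K2 ((K1*K2) choose t) ((K1*K2 - K2) choose (t - K2))
           (((K1*K2 - 1) choose (t - 1)) - ((K1*K2 - K2) choose (t - K2))) Sm S P0 P \<and>
            int (card (\<Union>k1\<in>{1..K1}. S k1)) - int (card Sm) = int ((K1 * K2) choose (t + 1)) \<and>
            (\<forall>k1\<in>{1..K1}. int (card (S k1)) =
               int ((K1 * K2) choose (t + 1)) - int ((K1 * K2 - K2) choose (t + 1))
               + int K2 * int ((K1 * K2 - K2) choose (t - K2)))"
proof -
  define F where "F = (K1*K2) choose t"
  define Z1 where "Z1 = (K1*K2 - K2) choose (t - K2)"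
  define Z2 where "Z2 = ((K1*K2 - 1) choose (t - 1)) - ((K1*K2 - K2) choose (t - K2))"
  obtain g :: "(nat \<times> nat) set + (nat \<times> nat) \<times> (nat \<times> nat) set \<Rightarrow> int" where g: "inj_on g Lab"
    using inj_to_int[OF finLab] by blast
  define lab where "lab k1 j k2 = (if (k1,k2) \<in> r j then Inr ((k1,k2), r j) else Inl (insert (k1,k2) (r j)))" for k1 j k2
  define P where "P k1 j k2 = (if (k1,k2) \<in> r j \<and> \<not> G k1 \<subseteq> r j then None else Some (g (lab k1 j k2)))" for k1 j k2
  define P0 where "P0 j k1 = (G k1 \<subseteq> r j)" for j k1
  define S where "S k1 = {s. \<exists>j\<in>{1..F}. \<exists>k\<in>{1..K2}. P k1 j k = Some s}" for k1
  define Sm where "Sm = g ` Inr ` Bm"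
  have rR: "j \<in> {1..F} \<Longrightarrow> r j \<in> Rows" for j using r by (auto simp: bij_betw_def F_def)
  have rinj: "j \<in> {1..F} \<Longrightarrow> j' \<in> {1..F} \<Longrightarrow> r j = r j' \<Longrightarrow> j = j'" for j j'
    using r by (auto simp: bij_betw_def inj_on_def F_def)
  have rsurj: "\<exists>j\<in>{1..F}. r j = T" if "T \<in> Rows" for T
  proof -
    have "T \<in> r ` {1..F}" using r that by (simp add: bij_betw_def F_def)
    then show ?thesis by blast
  qed
  have uU: "k1 \<in> {1..K1} \<Longrightarrow> k2 \<in> {1..K2} \<Longrightarrow> (k1,k2) \<in> U" for k1 k2 by (simp add: U_def)
  have labin: "k1 \<in> {1..K1} \<Longrightarrow> k2 \<in> {1..K2} \<Longrightarrow> j \<in> {1..F} \<Longrightarrow> lab k1 j k2 \<in> Lab" for k1 j k2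
    using ins_Atp[OF uU rR] uU rR by (auto simp: lab_def Lab_def)
  have Pnone: "P k1 j k2 = None \<longleftrightarrow> (k1,k2) \<in> r j \<and> \<not> G k1 \<subseteq> r j" for k1 j k2
    by (simp add: P_def)
  have Plab: "k1 \<in> {1..K1} \<Longrightarrow> k2 \<in> {1..K2} \<Longrightarrow> j \<in> {1..F} \<Longrightarrow>
              k1' \<in> {1..K1} \<Longrightarrow> k2' \<in> {1..K2} \<Longrightarrow> j' \<in> {1..F} \<Longrightarrow>
              P k1 j k2 = Some s \<Longrightarrow> P k1' j' k2' = Some s \<Longrightarrow> lab k1 j k2 = lab k1' j' k2'"
    for k1 j k2 k1' j' k2' s
  proof -
    assume a: "k1 \<in> {1..K1}" "k2 \<in> {1..K2}" "j \<in> {1..F}" "k1' \<in> {1..K1}" "k2' \<in> {1..K2}" "j' \<in> {1..F}"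
      "P k1 j k2 = Some s" "P k1' j' k2' = Some s"
    then have "g (lab k1 j k2) = g (lab k1' j' k2')" by (simp add: P_def split: if_splits)
    then show ?thesis using inj_onD[OF g _ labin[of k1 k2 j] labin[of k1' k2' j']] a by blast
  qed

  have PSome: "P k1 j k2 = Some s \<Longrightarrow> s = g (lab k1 j k2)" for k1 j k2 s
    by (simp add: P_def split: if_splits)
  have labR: "lab k1 j k2 = Inr (u, T) \<Longrightarrow> u = (k1,k2) \<and> T = r j \<and> (k1,k2) \<in> r j" for k1 j k2 u T
    by (simp add: lab_def split: if_splits)
  have labL: "lab k1 j k2 = Inl A \<Longrightarrow> (k1,k2) \<notin> r j \<and> A = insert (k1,k2) (r j)" for k1 j k2 A
    by (simp add: lab_def split: if_splits)
  have labI: "(k1,k2) \<notin> r j \<Longrightarrow> lab k1 j k2 = Inl (insert (k1,k2) (r j))" for k1 j k2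
    by (simp add: lab_def)
  have labI2: "(k1,k2) \<in> r j \<Longrightarrow> lab k1 j k2 = Inr ((k1,k2), r j)" for k1 j k2
    by (simp add: lab_def)
  have rb: "bij_betw r {1..F} Rows" using r by (simp add: F_def)
  have Fpos: "0 < F" unfolding F_def using tK by simp
  have inGk: "k2 \<in> {1..K2} \<Longrightarrow> (k1,k2) \<in> G k1" for k1 k2 by (simp add: G_def)
  have C3: "j1 \<noteq> j2 \<and> ka \<noteq> kb \<and> P k1 j1 kb = None \<and> P k1 j2 ka = None"
    if a: "k1 \<in> {1..K1}" "j1 \<in> {1..F}" "j2 \<in> {1..F}" "ka \<in> {1..K2}" "kb \<in> {1..K2}"
      "(j1, ka) \<noteq> (j2, kb)" "P k1 j1 ka = Some s" "P k1 j2 kb = Some s" for k1 j1 j2 ka kb s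
  proof -
    have e: "lab k1 j1 ka = lab k1 j2 kb" using Plab a by blast
    show ?thesis
    proof (cases "(k1,ka) \<in> r j1")
      case True
      then have "lab k1 j2 kb = Inr ((k1,ka), r j1)" using e labI2 by metis
      from labR[OF this] have "ka = kb" "r j1 = r j2" by auto
      then have "j1 = j2" using rinj a by blast
      then show ?thesis using a \<open>ka = kb\<close> by simp
    next
      case False
      then have "lab k1 j2 kb = Inl (insert (k1,ka) (r j1))" using e labI by metis
      from labL[OF this] have n2: "(k1,kb) \<notin> r j2" and ins: "insert (k1,ka) (r j1) = insert (k1,kb) (r j2)" by auto
      have "ka \<noteq> kb"
      proof
        assume "ka = kb"
        then have "r j1 = r j2" using ins False n2 by (metis insert_ident)
        then have "j1 = j2" using rinj a by blast
        then show False using a \<open>ka = kb\<close> by simp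
      qed
      then have m1: "(k1,kb) \<in> r j1" and m2: "(k1,ka) \<in> r j2" using ins by (auto dest: equalityD1 equalityD2)
      have "j1 \<noteq> j2" using m2 False by auto
      moreover have "\<not> G k1 \<subseteq> r j1" using False inGk[OF a(4)] by (meson subsetD)
      moreover have "\<not> G k1 \<subseteq> r j2" using n2 inGk[OF a(5)] by (meson subsetD)
      ultimately show ?thesis using m1 m2 \<open>ka \<noteq> kb\<close> by (simp add: Pnone)
    qed
  qed
  have Seq: "S k1 = g ` (Inl ` Ak k1 \<union> Inr ` Bk k1)" if k1: "k1 \<in> {1..K1}" for k1
  proof (intro set_eqI iffI)
    fix s assume "s \<in> S k1"
    then obtain j k where jk: "j \<in> {1..F}" "k \<in> {1..K2}" "P k1 j k = Some s" by (auto simp: S_def)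
    show "s \<in> g ` (Inl ` Ak k1 \<union> Inr ` Bk k1)"
    proof (cases "(k1,k) \<in> r j")
      case True
      then have "G k1 \<subseteq> r j" using jk Pnone by (metis option.distinct(1))
      then have "((k1,k), r j) \<in> Bk k1" using inGk[OF jk(2)] rR[OF jk(1)] by (simp add: Bk_def)
      then show ?thesis using PSome[OF jk(3)] labI2[OF True] by blast
    next
      case False
      have "insert (k1,k) (r j) \<in> Ak k1" using ins_Atp[OF uU[OF k1 jk(2)] rR[OF jk(1)] False] inGk[OF jk(2), of k1]
        by (auto simp: Ak_def)
      then show ?thesis using PSome[OF jk(3)] labI[OF False] by blast
    qed
  next
    fix s assume "s \<in> g ` (Inl ` Ak k1 \<union> Inr ` Bk k1)"
    then consider A where "A \<in> Ak k1" "s = g (Inl A)" | u T where "(u,T) \<in> Bk k1" "s = g (Inr (u,T))" by auto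
    then show "s \<in> S k1"
    proof cases
      case 1
      then obtain u where u: "u \<in> A" "u \<in> G k1" and A: "A \<in> Atp" by (auto simp: Ak_def)
      then obtain k where k: "u = (k1,k)" "k \<in> {1..K2}" by (auto simp: G_def)
      have "A - {u} \<in> Rows" using del_Rows A u by blast
      then obtain j where j: "j \<in> {1..F}" "r j = A - {u}" using rsurj by blast
      have "(k1,k) \<notin> r j" using j k by simp
      then have "P k1 j k = Some (g (Inl A))" using labI j k u Pnone by (simp add: P_def insert_absorb)
      then show ?thesis using 1 j k unfolding S_def by blast
    next
      case 2
      then have u: "u \<in> G k1" "G k1 \<subseteq> T" "T \<in> Rows" by (auto simp: Bk_def)
      then obtain k where k: "u = (k1,k)" "k \<in> {1..K2}" by (auto simp: G_def)
      obtain j where j: "j \<in> {1..F}" "r j = T" using rsurj u by blast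
      have "(k1,k) \<in> r j" using j k u by auto
      then have "P k1 j k = Some (g (Inr (u,T)))" using labI2 j k u by (simp add: P_def)
      then show ?thesis using 2 j k unfolding S_def by blast
    qed
  qed
  have AkU: "(\<Union>k1\<in>{1..K1}. Ak k1) = Atp"
  proof (intro set_eqI iffI)
    fix A assume "A \<in> Atp"
    then have "A \<noteq> {}" "A \<subseteq> U" by (auto simp: Atp_def)
    then obtain x where "x \<in> A" by blast
    then obtain a b where "(a,b) \<in> A" "a \<in> {1..K1}" "b \<in> {1..K2}" using \<open>A \<subseteq> U\<close> unfolding U_def by (cases x) blast
    then have "A \<in> Ak a" using \<open>A \<in> Atp\<close> inGk[of b a] unfolding Ak_def by blast
    then show "A \<in> (\<Union>k1\<in>{1..K1}. Ak k1)" using \<open>a \<in> {1..K1}\<close> by blast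
  qed (auto simp: Ak_def)
  have BkU: "(\<Union>k1\<in>{1..K1}. Bk k1) = Bm"
    by (auto simp: Bk_def Bm_def G_def U_def)
  have Ueq: "(\<Union>k1\<in>{1..K1}. S k1) = g ` (Inl ` Atp \<union> Inr ` Bm)"
  proof -
    have "(\<Union>k1\<in>{1..K1}. S k1) = (\<Union>k1\<in>{1..K1}. g ` (Inl ` Ak k1 \<union> Inr ` Bk k1))" using Seq by simp
    also have "\<dots> = g ` (Inl ` (\<Union>k1\<in>{1..K1}. Ak k1) \<union> Inr ` (\<Union>k1\<in>{1..K1}. Bk k1))" by blast
    finally show ?thesis using AkU BkU by simp
  qed
  have cardI: "card (g ` (Inl ` A \<union> Inr ` B)) = card A + card B"
    if "A \<subseteq> Atp" "B \<subseteq> U \<times> Rows" for A B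
  proof -
    have fin: "finite A" "finite B" using that finite_subset finAtp finite_cartesian_product[OF finU finRows] by blast+
    have "Inl ` A \<union> Inr ` B \<subseteq> Lab" using that by (auto simp: Lab_def)
    then have "card (g ` (Inl ` A \<union> Inr ` B)) = card (Inl ` A \<union> Inr ` B)"
      using g by (meson card_image inj_on_subset)
    also have "\<dots> = card A + card B" using fin by (subst card_Un_disjoint) (auto simp: card_image)
    finally show ?thesis .
  qed
  have BmS: "Bm \<subseteq> U \<times> Rows" by (auto simp: Bm_def)
  have AkS: "Ak k1 \<subseteq> Atp" for k1 by (auto simp: Ak_def)
  have BkS: "k1 \<in> {1..K1} \<Longrightarrow> Bk k1 \<subseteq> U \<times> Rows" for k1 using GU by (auto simp: Bk_def)
  have cardS: "card (S k1) = card (Ak k1) + card (Bk k1)" if "k1 \<in> {1..K1}" for k1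
    using Seq[OF that] cardI[OF AkS BkS[OF that]] by simp
  have cardUS: "card (\<Union>k1\<in>{1..K1}. S k1) = card Atp + card Bm" using Ueq cardI[OF _ BmS] by simp
  have cardSm: "card Sm = card Bm"
    using cardI[of "{}" Bm] BmS by (simp add: Sm_def)
  have Z1F: "Z1 < F" and Z2F: "Z2 < F"
  proof -
    have "(1::nat,1::nat) \<in> G 1" using K2pos by (simp add: G_def)
    then have "Z1 \<le> (K1*K2 - 1) choose (t - 1)" unfolding Z1_def using Z1_le[of 1 "(1,1)"] K1pos by simp
    then show "Z1 < F" "Z2 < F" using binom_lt unfolding F_def Z2_def by linarith+
  qed
  have B1: "\<forall>k1\<in>{1..K1}. card {j\<in>{1..F}. P0 j k1} = Z1"
    using bij_count[OF rb, of "\<lambda>T. G _ \<subseteq> T"] cardZ1 unfolding P0_def Z1_def by simp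
  have B2: "pda K2 F Z2 (S k1) (P k1)" if k1: "k1 \<in> {1..K1}" for k1
  proof -
    have fin: "finite (S k1)" using Seq[OF k1] by simp
    have "0 < card (Bk k1)" using cardBk[OF k1] Z1pos K2pos by simp
    then have cpos: "0 < card (S k1)" using cardS[OF k1] by simp
    have ent: "\<forall>j\<in>{1..F}. \<forall>k\<in>{1..K2}. P k1 j k = None \<or> (\<exists>s\<in>S k1. P k1 j k = Some s)"
    proof (intro ballI)
      fix j k assume jk: "j \<in> {1..F}" "k \<in> {1..K2}"
      show "P k1 j k = None \<or> (\<exists>s\<in>S k1. P k1 j k = Some s)"
      proof (cases "P k1 j k")
        case (Some s)
        then have "s \<in> S k1" using jk unfolding S_def by blast
        then show ?thesis using Some by blast
      qed simp
    qed
    have col: "\<forall>k\<in>{1..K2}. card {j\<in>{1..F}. P k1 j k = None} = Z2"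
    proof
      fix k assume k: "k \<in> {1..K2}"
      have "card {j\<in>{1..F}. P k1 j k = None} = card {T \<in> Rows. (k1,k) \<in> T \<and> \<not> G k1 \<subseteq> T}"
        unfolding Pnone by (rule bij_count[OF rb])
      also have "\<dots> = Z2" using cardZ2[OF k1 inGk[OF k]] by (simp add: Z2_def)
      finally show "card {j\<in>{1..F}. P k1 j k = None} = Z2" .
    qed
    have app: "\<forall>s\<in>S k1. \<exists>j\<in>{1..F}. \<exists>k\<in>{1..K2}. P k1 j k = Some s" by (simp add: S_def)
    have c3: "\<forall>j1\<in>{1..F}. \<forall>ka\<in>{1..K2}. \<forall>j2\<in>{1..F}. \<forall>kb\<in>{1..K2}. \<forall>s.
        (j1, ka) \<noteq> (j2, kb) \<and> P k1 j1 ka = Some s \<and> P k1 j2 kb = Some s \<longrightarrow>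
        j1 \<noteq> j2 \<and> ka \<noteq> kb \<and> P k1 j1 kb = None \<and> P k1 j2 ka = None"
      using C3[OF k1] by blast
    show ?thesis unfolding pda_def using K2pos Fpos fin cpos ent col app c3 by blast
  qed
  have B3: "\<forall>s\<in>Sm. (\<exists>!k1. k1 \<in> {1..K1} \<and> (\<exists>j\<in>{1..F}. \<exists>k2\<in>{1..K2}. P k1 j k2 = Some s)) \<and>
        (\<forall>k1\<in>{1..K1}. \<forall>j\<in>{1..F}. \<forall>k2\<in>{1..K2}. P k1 j k2 = Some s \<longrightarrow> P0 j k1)"
  proof
    fix s assume "s \<in> Sm"
    then obtain u T where uT: "(u,T) \<in> Bm" "s = g (Inr (u,T))" by (auto simp: Sm_def)
    then obtain a b where ab: "u = (a,b)" "a \<in> {1..K1}" "b \<in> {1..K2}" "T \<in> Rows" "G a \<subseteq> T"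
      by (auto simp: Bm_def U_def)
    have inL: "Inr (u,T) \<in> Lab" using uT by (auto simp: Lab_def Bm_def)
    have key: "(k1,k2) = u \<and> G k1 \<subseteq> r j" if "k1 \<in> {1..K1}" "j \<in> {1..F}" "k2 \<in> {1..K2}" "P k1 j k2 = Some s" for k1 j k2
    proof -
      have "g (lab k1 j k2) = g (Inr (u,T))" using PSome[OF that(4)] uT by simp
      then have "lab k1 j k2 = Inr (u,T)" using inj_onD[OF g _ labin[OF that(1,3,2)] inL] by blast
      from labR[OF this] have "(k1,k2) = u" "(k1,k2) \<in> r j" by auto
      moreover have "G k1 \<subseteq> r j" using \<open>(k1,k2) \<in> r j\<close> that(4) Pnone by (metis option.distinct(1))
      ultimately show ?thesis by blast
    qed
    obtain j where j: "j \<in> {1..F}" "r j = T" using rsurj ab by blast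
    have "u \<in> G a" using ab inGk by simp
    then have "(a,b) \<in> r j" using ab j by auto
    then have Pab: "P a j b = Some s" using labI2 uT ab j by (simp add: P_def)
    show "(\<exists>!k1. k1 \<in> {1..K1} \<and> (\<exists>j\<in>{1..F}. \<exists>k2\<in>{1..K2}. P k1 j k2 = Some s)) \<and>
        (\<forall>k1\<in>{1..K1}. \<forall>j\<in>{1..F}. \<forall>k2\<in>{1..K2}. P k1 j k2 = Some s \<longrightarrow> P0 j k1)"
    proof
      show "\<exists>!k1. k1 \<in> {1..K1} \<and> (\<exists>j\<in>{1..F}. \<exists>k2\<in>{1..K2}. P k1 j k2 = Some s)"
      proof (rule ex1I[of _ a])
        show "a \<in> {1..K1} \<and> (\<exists>j\<in>{1..F}. \<exists>k2\<in>{1..K2}. P a j k2 = Some s)" using Pab ab j by blast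
      next
        fix k1 assume "k1 \<in> {1..K1} \<and> (\<exists>j\<in>{1..F}. \<exists>k2\<in>{1..K2}. P k1 j k2 = Some s)"
        then show "k1 = a" using key ab by blast
      qed
    next
      show "\<forall>k1\<in>{1..K1}. \<forall>j\<in>{1..F}. \<forall>k2\<in>{1..K2}. P k1 j k2 = Some s \<longrightarrow> P0 j k1"
        using key unfolding P0_def by blast
    qed
  qed
  have B4: "\<forall>k1\<in>{1..K1}. \<forall>k1'\<in>{1..K1}. \<forall>j\<in>{1..F}. \<forall>j'\<in>{1..F}. \<forall>k2\<in>{1..K2}. \<forall>k2'\<in>{1..K2}. \<forall>s.
        k1 \<noteq> k1' \<and> P k1 j k2 = Some s \<and> P k1' j' k2' = Some s \<longrightarrow>
        (P k1 j' k2 \<noteq> None \<longrightarrow> P0 j' k1) \<and> (P k1' j k2' \<noteq> None \<longrightarrow> P0 j k1')"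
  proof (intro ballI allI impI)
    fix k1 k1' j j' k2 k2' s
    assume r1: "k1 \<in> {1..K1}" "k1' \<in> {1..K1}" "j \<in> {1..F}" "j' \<in> {1..F}" "k2 \<in> {1..K2}" "k2' \<in> {1..K2}"
      and h: "k1 \<noteq> k1' \<and> P k1 j k2 = Some s \<and> P k1' j' k2' = Some s"
    have e: "lab k1 j k2 = lab k1' j' k2'" using Plab r1 h by blast
    have nin: "(k1,k2) \<notin> r j"
    proof
      assume "(k1,k2) \<in> r j"
      then have "lab k1' j' k2' = Inr ((k1,k2), r j)" using e labI2 by metis
      from labR[OF this] h show False by auto
    qed
    then have "lab k1' j' k2' = Inl (insert (k1,k2) (r j))" using e labI by metis
    from labL[OF this] have n2: "(k1',k2') \<notin> r j'" and ins: "insert (k1,k2) (r j) = insert (k1',k2') (r j')" by auto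
    have m1: "(k1',k2') \<in> r j" and m2: "(k1,k2) \<in> r j'" using ins h by (auto dest: equalityD1 equalityD2)
    show "(P k1 j' k2 \<noteq> None \<longrightarrow> P0 j' k1) \<and> (P k1' j k2' \<noteq> None \<longrightarrow> P0 j k1')"
      using m1 m2 unfolding P0_def Pnone by blast
  qed
  have hp: "hpda K1 K2 F Z1 Z2 Sm S P0 P"
    unfolding hpda_def using K1pos K2pos Fpos Z1pos Z1F Z2F B1 B2 B3 B4 unfolding Z1_def by blast
  have c1: "int (card (\<Union>k1\<in>{1..K1}. S k1)) - int (card Sm) = int ((K1 * K2) choose (t + 1))"
    using cardUS cardSm cardAtp by simp
  have c2: "\<forall>k1\<in>{1..K1}. int (card (S k1)) =
               int ((K1 * K2) choose (t + 1)) - int ((K1 * K2 - K2) choose (t + 1))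
               + int K2 * int ((K1 * K2 - K2) choose (t - K2))"
  proof
    fix k1 assume k1: "k1 \<in> {1..K1}"
    have le: "(K1 * K2 - K2) choose Suc t \<le> (K1 * K2) choose Suc t" by (rule binomial_right_mono) simp
    show "int (card (S k1)) = int ((K1 * K2) choose (t + 1)) - int ((K1 * K2 - K2) choose (t + 1))
               + int K2 * int ((K1 * K2 - K2) choose (t - K2))"
      using cardS[OF k1] cardAk[OF k1] cardBk[OF k1] le by (simp add: of_nat_diff)
  qed
  show ?thesis using hp c1 c2 unfolding F_def Z1_def Z2_def by blast
qed
end


definition vec :: "bool list \<Rightarrow> nat \<Rightarrow> bit" where
  "vec p = (\<lambda>i. if i < length p \<and> p ! i then 1 else 0)"
definition unvec :: "nat \<Rightarrow> (nat \<Rightarrow> bit) \<Rightarrow> bool list" where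
  "unvec L x = map (\<lambda>i. x i = 1) [0..<L]"
definition short :: "nat \<Rightarrow> (nat \<Rightarrow> bit) \<Rightarrow> bool" where
  "short L x \<longleftrightarrow> (\<forall>i. L \<le> i \<longrightarrow> x i = 0)"

lemma length_unvec[simp]: "length (unvec L x) = L" by (simp add: unvec_def)

lemma bit_cases2: "(x::bit) = 0 \<or> x = 1" by (cases x) auto

lemma vec_unvec: "short L x \<Longrightarrow> vec (unvec L x) = x"
proof (rule ext)
  fix i assume s: "short L x"
  show "vec (unvec L x) i = x i"
  proof (cases "i < L")
    case True then show ?thesis using bit_cases2[of "x i"] by (auto simp: vec_def unvec_def)
  next
    case False then show ?thesis using s by (simp add: vec_def unvec_def short_def)
  qed
qed

lemma unvec_vec: "length p = L \<Longrightarrow> unvec L (vec p) = p"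
  by (rule nth_equalityI) (auto simp: vec_def unvec_def)

lemma short_vec: "length p \<le> L \<Longrightarrow> short L (vec p)"
  by (simp add: short_def vec_def)

lemma short_add: "short L x \<Longrightarrow> short L y \<Longrightarrow> short L (x + y)" by (simp add: short_def)
lemma short_diff: "short L x \<Longrightarrow> short L y \<Longrightarrow> short L (x - y)" by (simp add: short_def)
lemma short_sum: "(\<And>a. a \<in> A \<Longrightarrow> short L (f a)) \<Longrightarrow> short L (\<Sum>a\<in>A. f a)"
proof (induction A rule: infinite_finite_induct)
  case (insert x F)
  have "short L (f x + sum f F)" by (rule short_add) (use insert in auto)
  then show ?case by (simp only: sum.insert[OF insert.hyps])
qed (simp_all add: short_def)

lemma packet_len: "length (W n) = F * L \<Longrightarrow> f \<in> {1..F} \<Longrightarrow> length (packet L W n f) = L"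
proof -
  assume a: "length (W n) = F * L" "f \<in> {1..F}"
  have "F * L - (f - 1) * L = (F - (f - 1)) * L" by (simp add: diff_mult_distrib)
  moreover have "F - (f - 1) \<ge> 1" using a by auto
  ultimately have "F * L - (f - 1) * L \<ge> L" by (metis mult_1 mult_le_mono1)
  then show ?thesis using a by (simp add: packet_def)
qed

lemma packet_le: "length (packet L W n f) \<le> L" by (simp add: packet_def)

lemma concat_blocks: "length w = F * L \<Longrightarrow> concat (map (\<lambda>i. take L (drop (i*L) w)) [0..<F]) = w"
proof (induction F arbitrary: w)
  case 0 then show ?case by simp
next
  case (Suc F)
  have "length (drop L w) = F * L" using Suc.prems by simp
  then have IH: "concat (map (\<lambda>i. take L (drop (i*L) (drop L w))) [0..<F]) = drop L w" by (rule Suc.IH)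
  have "[0..<Suc F] = 0 # map Suc [0..<F]" by (simp add: upt_conv_Cons map_Suc_upt)
  then have "concat (map (\<lambda>i. take L (drop (i*L) w)) [0..<Suc F])
      = concat (map (\<lambda>i. take L (drop (i*L) w)) (0 # map Suc [0..<F]))" by (simp only:)
  also have "\<dots> = take L w @ concat (map ((\<lambda>i. take L (drop (i*L) w)) \<circ> Suc) [0..<F])" by simp
  also have "((\<lambda>i. take L (drop (i*L) w)) \<circ> Suc) = (\<lambda>i. take L (drop (i*L) (drop L w)))"
    by (simp add: comp_def add.commute)
  finally show ?case using IH by simp
qed

lemma concat_packets: "length (W n) = F * L \<Longrightarrow> concat (map (packet L W n) [1..<F+1]) = W n"
proof -
  assume a: "length (W n) = F * L"
  have "[1..<F+1] = map Suc [0..<F]" by (simp add: map_Suc_upt)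
  then have "map (packet L W n) [1..<F+1] = map (\<lambda>i. take L (drop (i*L) (W n))) [0..<F]"
    by (simp add: packet_def)
  then show ?thesis using concat_blocks[OF a] by simp
qed

lemma cache_of_in: "(n, f) \<in> Zc \<Longrightarrow> cache_of L Zc W (n, f) = packet L W n f"
  by (simp add: cache_of_def)

lemma bij_inv_lt: assumes "bij_betw h {0..<n} S" "x \<in> S"
  shows "inv_into {0..<n} h x < n" "h (inv_into {0..<n} h x) = x"
proof -
  have "inv_into {0..<n} h x \<in> {0..<n}" using assms by (metis bij_betw_def inv_into_into)
  then show "inv_into {0..<n} h x < n" by simp
  show "h (inv_into {0..<n} h x) = x" using assms by (simp add: bij_betw_inv_into_right)
qed

context hsetup begin

lemma decode:
  fixes r :: "nat \<Rightarrow> (nat \<times> nat) set" and As :: "nat \<Rightarrow> (nat \<times> nat) set"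
    and ak :: "nat \<Rightarrow> nat \<Rightarrow> (nat \<times> nat) set" and bk :: "nat \<Rightarrow> nat \<Rightarrow> (nat \<times> nat) \<times> (nat \<times> nat) set"
    and W :: "nat \<Rightarrow> bool list" and d :: "nat \<times> nat \<Rightarrow> nat"
  assumes r: "bij_betw r {1..F} Rows" and FF: "F = (K1*K2) choose t"
    and As: "bij_betw As {0..<card Atp} Atp"
    and ak: "\<And>k1. bij_betw (ak k1) {0..<card (Ak k1)} (Ak k1)"
    and bk: "\<And>k1. bij_betw (bk k1) {0..<card (Bk k1)} (Bk k1)"
    and lenW: "\<And>n. n \<in> {1..N} \<Longrightarrow> length (W n) = F * L"
    and dv: "\<And>v. v \<in> U \<Longrightarrow> d v \<in> {1..N}"
    and k1: "k1 \<in> {1..K1}" and k2: "k2 \<in> {1..K2}"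
  defines "Zm \<equiv> \<lambda>k1. {1..N} \<times> {j\<in>{1..F}. G k1 \<subseteq> r j}"
    and "Zu \<equiv> \<lambda>(k1,k2). {1..N} \<times> {j\<in>{1..F}. (k1,k2) \<in> r j \<and> \<not> G k1 \<subseteq> r j}"
    and "enc \<equiv> \<lambda>d W. map (\<lambda>i. unvec L (\<Sum>v\<in>As i. vec (packet L W (d v) (inv_into {1..F} r (As i - {v}))))) [0..<card Atp]"
    and "mir \<equiv> \<lambda>k1 d X C. map (\<lambda>i. unvec L (vec (X ! inv_into {0..<card Atp} As (ak k1 i))
              - (\<Sum>v\<in>{v\<in>ak k1 i. G k1 \<subseteq> ak k1 i - {v}}. vec (C (d v, inv_into {1..F} r (ak k1 i - {v})))))) [0..<card (Ak k1)]
           @ map (\<lambda>i. unvec L (vec (C (d (fst (bk k1 i)), inv_into {1..F} r (snd (bk k1 i)))))) [0..<card (Bk k1)]"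
    and "dec \<equiv> \<lambda>(k1,k2) d Y C. concat (map (\<lambda>f.
              if (k1,k2) \<in> r f \<and> \<not> G k1 \<subseteq> r f then C (d (k1,k2), f)
              else if G k1 \<subseteq> r f then Y ! (card (Ak k1) + inv_into {0..<card (Bk k1)} (bk k1) ((k1,k2), r f))
              else unvec L (vec (Y ! inv_into {0..<card (Ak k1)} (ak k1) (insert (k1,k2) (r f)))
                 - (\<Sum>v\<in>{v\<in>insert (k1,k2) (r f) - {(k1,k2)}. \<not> G k1 \<subseteq> insert (k1,k2) (r f) - {v}}.
                      vec (C (d v, inv_into {1..F} r (insert (k1,k2) (r f) - {v})))))) [1..<F+1])"
  shows "dec (k1,k2) d (mir k1 d (enc d W) (cache_of L (Zm k1) W)) (cache_of L (Zu (k1,k2)) W) = W (d (k1,k2))"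
proof -
  define u where "u = (k1,k2)"
  have uU: "u \<in> U" using k1 k2 by (simp add: u_def U_def)
  have uG: "u \<in> G k1" using k2 by (simp add: u_def G_def)
  define Cm where "Cm = cache_of L (Zm k1) W"
  define Cu where "Cu = cache_of L (Zu (k1,k2)) W"
  define X where "X = enc d W"
  define Y where "Y = mir k1 d X Cm"
  have rR: "f \<in> {1..F} \<Longrightarrow> r f \<in> Rows" for f using r by (auto simp: bij_betw_def)
  have riR: "T \<in> Rows \<Longrightarrow> inv_into {1..F} r T \<in> {1..F}" for T
    using r by (metis bij_betw_def inv_into_into)
  have rri: "T \<in> Rows \<Longrightarrow> r (inv_into {1..F} r T) = T" for T using r by (simp add: bij_betw_inv_into_right)
  have rir: "f \<in> {1..F} \<Longrightarrow> inv_into {1..F} r (r f) = f" for f using r by (simp add: bij_betw_inv_into_left)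
  have plen: "n \<in> {1..N} \<Longrightarrow> f \<in> {1..F} \<Longrightarrow> length (packet L W n f) = L" for n f
    using packet_len lenW by blast
  have sh: "short L (vec (packet L W n f))" for n f by (rule short_vec[OF packet_le])
  have dn: "d u \<in> {1..N}" using dv uU by blast
  have each: "(if (k1,k2) \<in> r f \<and> \<not> G k1 \<subseteq> r f then Cu (d (k1,k2), f)
              else if G k1 \<subseteq> r f then Y ! (card (Ak k1) + inv_into {0..<card (Bk k1)} (bk k1) ((k1,k2), r f))
              else unvec L (vec (Y ! inv_into {0..<card (Ak k1)} (ak k1) (insert (k1,k2) (r f)))
                 - (\<Sum>v\<in>{v\<in>insert (k1,k2) (r f) - {(k1,k2)}. \<not> G k1 \<subseteq> insert (k1,k2) (r f) - {v}}.
                      vec (Cu (d v, inv_into {1..F} r (insert (k1,k2) (r f) - {v})))))) = packet L W (d u) f"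
    if f: "f \<in> {1..F}" for f
  proof -
    let ?T = "r f"
    have TR: "?T \<in> Rows" using rR f .
    have dU: "v \<in> U \<Longrightarrow> d v \<in> {1..N}" for v using dv by blast
    have XA: "X ! inv_into {0..<card Atp} As A = unvec L (\<Sum>v\<in>A. vec (packet L W (d v) (inv_into {1..F} r (A - {v}))))"
      if "A \<in> Atp" for A
    proof -
      have i: "inv_into {0..<card Atp} As A \<in> {0..<card Atp}" "As (inv_into {0..<card Atp} As A) = A"
        using bij_inv_lt[OF As that] by auto
      then show ?thesis by (simp add: X_def enc_def)
    qed
    show ?thesis
    proof (cases "(k1,k2) \<in> ?T \<and> \<not> G k1 \<subseteq> ?T")
      case True
      have "(d u, f) \<in> Zu (k1,k2)" using True f dn by (simp add: Zu_def u_def)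
      then show ?thesis using True by (simp add: Cu_def cache_of_in u_def)
    next
      case c1: False
      show ?thesis
      proof (cases "G k1 \<subseteq> ?T")
        case True
        define p where "p = ((k1,k2), ?T)"
        have pB: "p \<in> Bk k1" using True TR uG by (simp add: p_def Bk_def u_def)
        define i where "i = inv_into {0..<card (Bk k1)} (bk k1) p"
        have i: "i < card (Bk k1)" "bk k1 i = p"
          using bij_inv_lt[OF bk pB] by (auto simp: i_def)
        have len1: "length (map (\<lambda>i. unvec L (vec (X ! inv_into {0..<card Atp} As (ak k1 i))
              - (\<Sum>v\<in>{v\<in>ak k1 i. G k1 \<subseteq> ak k1 i - {v}}. vec (Cm (d v, inv_into {1..F} r (ak k1 i - {v})))))) [0..<card (Ak k1)]) = card (Ak k1)"
          by simp
        have "Y ! (card (Ak k1) + i) = unvec L (vec (Cm (d u, inv_into {1..F} r ?T)))"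
          unfolding Y_def mir_def using i by (simp add: nth_append p_def u_def)
        also have "(d u, inv_into {1..F} r ?T) \<in> Zm k1"
          using dn riR[OF TR] rri[OF TR] True by (simp add: Zm_def)
        then have "Cm (d u, inv_into {1..F} r ?T) = packet L W (d u) f"
          using rir[OF f] by (simp add: Cm_def cache_of_in)
        finally have "Y ! (card (Ak k1) + i) = packet L W (d u) f"
          using unvec_vec plen[OF dn f] by simp
        then show ?thesis using c1 True by (simp add: i_def p_def)
      next
        case c2: False
        then have nT: "u \<notin> ?T" using c1 by (auto simp: u_def)
        define A where "A = insert u ?T"
        have AA: "A \<in> Atp" using ins_Atp[OF uU TR nT] by (simp add: A_def)
        have AAk: "A \<in> Ak k1" using AA uG by (auto simp: Ak_def A_def)
        have AU: "A \<subseteq> U" using AA by (simp add: Atp_def)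
        have Arow: "v \<in> A \<Longrightarrow> A - {v} \<in> Rows" for v using del_Rows[OF AA] .
        define i where "i = inv_into {0..<card (Ak k1)} (ak k1) A"
        have i: "i < card (Ak k1)" "ak k1 i = A"
          using bij_inv_lt[OF ak AAk] by (auto simp: i_def)
        define V where "V v = vec (packet L W (d v) (inv_into {1..F} r (A - {v})))" for v
        have shV: "short L (V v)" for v by (simp add: V_def sh)
        define SA where "SA = (\<Sum>v\<in>A. V v)"
        define Rm where "Rm = (\<Sum>v\<in>{v\<in>A - {u}. G k1 \<subseteq> A - {v}}. V v)"
        define Ru where "Ru = (\<Sum>v\<in>{v\<in>A - {u}. \<not> G k1 \<subseteq> A - {v}}. V v)"
        have finA: "finite A" using AU finite_subset finU by blast
        have SAeq: "SA = V u + Rm + Ru"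
        proof -
          have "SA = V u + (\<Sum>v\<in>A - {u}. V v)" unfolding SA_def using finA nT
            by (simp add: A_def)
          also have "(\<Sum>v\<in>A - {u}. V v) = Rm + Ru"
            unfolding Rm_def Ru_def using finA
            by (subst sum.union_disjoint[symmetric]) (auto intro: sum.cong)
          finally show ?thesis by (simp only: add.assoc)
        qed
        have shSA: "short L SA" unfolding SA_def by (rule short_sum) (rule shV)
        have shRm: "short L Rm" unfolding Rm_def by (rule short_sum) (rule shV)
        have Rm_eq: "(\<Sum>v\<in>{v\<in>A. G k1 \<subseteq> A - {v}}. vec (Cm (d v, inv_into {1..F} r (A - {v})))) = Rm"
        proof -
          have "{v\<in>A. G k1 \<subseteq> A - {v}} = {v\<in>A - {u}. G k1 \<subseteq> A - {v}}" using uG by auto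
          moreover have "vec (Cm (d v, inv_into {1..F} r (A - {v}))) = V v" if "v \<in> A" "G k1 \<subseteq> A - {v}" for v
          proof -
            have "(d v, inv_into {1..F} r (A - {v})) \<in> Zm k1"
            proof -
              have vA: "v \<in> A" using that by blast
              then have "v \<in> U" using AU by blast
              then show ?thesis using that dU riR[OF Arow[OF vA]] rri[OF Arow[OF vA]] by (simp add: Zm_def)
            qed
            then show ?thesis by (simp add: Cm_def cache_of_in V_def)
          qed
          ultimately show ?thesis unfolding Rm_def by (auto intro: sum.cong)
        qed
        have Ru_eq: "(\<Sum>v\<in>{v\<in>insert (k1,k2) ?T - {(k1,k2)}. \<not> G k1 \<subseteq> insert (k1,k2) ?T - {v}}.
                      vec (Cu (d v, inv_into {1..F} r (insert (k1,k2) ?T - {v})))) = Ru"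
        proof -
          have "vec (Cu (d v, inv_into {1..F} r (A - {v}))) = V v" if "v \<in> A - {u}" "\<not> G k1 \<subseteq> A - {v}" for v
          proof -
            have "(d v, inv_into {1..F} r (A - {v})) \<in> Zu (k1,k2)"
            proof -
              have vA: "v \<in> A" using that by blast
              then have "v \<in> U" using AU by blast
              moreover have "(k1,k2) \<in> A - {v}" using that by (auto simp: A_def u_def)
              ultimately show ?thesis using that dU riR[OF Arow[OF vA]] rri[OF Arow[OF vA]] by (simp add: Zu_def)
            qed
            then show ?thesis by (simp add: Cu_def cache_of_in V_def)
          qed
          then show ?thesis unfolding Ru_def A_def u_def by (auto intro: sum.cong)
        qed
        have "X ! inv_into {0..<card Atp} As A = unvec L SA" using XA[OF AA] by (simp add: SA_def V_def)
        then have "Y ! i = unvec L (SA - Rm)"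
          unfolding Y_def mir_def using i Rm_eq vec_unvec[OF shSA] by (simp add: nth_append)
        then have "vec (Y ! i) = SA - Rm" using vec_unvec short_diff[OF shSA shRm] by simp
        then have "vec (Y ! i) - Ru = V u" unfolding SAeq by (simp only: diff_diff_eq add.assoc add_diff_cancel_right')
        then have "unvec L (vec (Y ! i) - Ru) = unvec L (V u)" by (simp only:)
        also have "\<dots> = packet L W (d u) f"
        proof -
          have "A - {u} = ?T" using nT by (simp add: A_def)
          then show ?thesis using unvec_vec[OF plen[OF dn f]] rir[OF f] by (simp add: V_def)
        qed
        finally show ?thesis using c1 c2 Ru_eq by (simp add: i_def A_def u_def)
      qed
    qed
  qed

  have "dec (k1,k2) d Y Cu = concat (map (packet L W (d u)) [1..<F+1])"
    apply (simp only: dec_def prod.case)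
    apply (rule arg_cong[where f=concat])
    apply (rule map_cong[OF refl])
    apply (rule each)
    by auto
  also have "\<dots> = W (d u)" using concat_packets lenW dn by blast
  finally show ?thesis by (simp add: Y_def X_def Cm_def Cu_def u_def)
qed


lemma binom_rate: "real ((K1*K2) choose (t+1)) / real ((K1*K2) choose t) = (real (K1*K2) - real t) / (real t + 1)"
proof -
  have "Suc t * ((K1*K2) choose Suc t) = (K1*K2) * ((K1*K2 - 1) choose t)" by (rule binomial_absorption)
  moreover have "(K1*K2 - t) * ((K1*K2) choose t) = (K1*K2) * ((K1*K2 - 1) choose t)" by (rule binomial_absorb_comp)
  ultimately have e: "(t + 1) * ((K1*K2) choose (t+1)) = (K1*K2 - t) * ((K1*K2) choose t)" by simp
  have "real (t + 1) * real ((K1*K2) choose (t+1)) = real (K1*K2 - t) * real ((K1*K2) choose t)"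
    using e by (metis of_nat_mult)
  moreover have "real (K1*K2 - t) = real (K1*K2) - real t" using tK by simp
  moreover have "0 < real ((K1*K2) choose t)" using tK by simp
  ultimately show ?thesis by (simp add: field_simps)
qed

lemma binom_t: "real t / real (K1*K2) = real ((K1*K2 - 1) choose (t - 1)) / real ((K1*K2) choose t)"
proof -
  have "t * ((K1*K2) choose t) = (K1*K2) * ((K1*K2 - 1) choose (t - 1))"
    using K2t by (intro times_binomial_minus1_eq) simp
  then have e: "real t * real ((K1*K2) choose t) = real (K1*K2) * real ((K1*K2 - 1) choose (t - 1))"
    by (metis of_nat_mult)
  have n1: "real (K1*K2) \<noteq> 0" using K1pos K2pos by simp
  have n2: "real ((K1*K2) choose t) \<noteq> 0" using tK by simp
  show ?thesis unfolding frac_eq_eq[OF n1 n2] by (metis e mult.commute)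
qed


lemma part2:
  fixes N B :: nat and r :: "nat \<Rightarrow> (nat \<times> nat) set" and As :: "nat \<Rightarrow> (nat \<times> nat) set"
    and ak :: "nat \<Rightarrow> nat \<Rightarrow> (nat \<times> nat) set" and bk :: "nat \<Rightarrow> nat \<Rightarrow> (nat \<times> nat) \<times> (nat \<times> nat) set"
  assumes r: "bij_betw r {1..(K1*K2) choose t} Rows"
    and As: "bij_betw As {0..<card Atp} Atp"
    and ak: "\<And>k1. bij_betw (ak k1) {0..<card (Ak k1)} (Ak k1)"
    and bk: "\<And>k1. bij_betw (bk k1) {0..<card (Bk k1)} (Bk k1)"
    and N: "K1 * K2 \<le> N" and Bd: "((K1*K2) choose t) dvd B"
  shows "\<exists>Zm Zu enc Sd mir Sk dec.
               hier_scheme K1 K2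
                 (real N * (real ((K1 * K2 - K2) choose (t - K2)) / real ((K1 * K2) choose t)))
                 (real N * (real t / real (K1 * K2) - real ((K1 * K2 - K2) choose (t - K2)) / real ((K1 * K2) choose t)))
                 N ((K1 * K2) choose t) B Zm Zu enc Sd mir Sk dec
                 ((real (K1 * K2) - real t) / (real t + 1))
                 ((real (K1 * K2) - real t) / (real t + 1)
                   - real ((K1 * K2 - K2) choose (t + 1)) / real ((K1 * K2) choose t)
                   + real K2 * real ((K1 * K2 - K2) choose (t - K2)) / real ((K1 * K2) choose t))"
proof -
  define F where "F = (K1*K2) choose t"
  define Z1 where "Z1 = (K1 * K2 - K2) choose (t - K2)"
  define Z2 where "Z2 = ((K1*K2 - 1) choose (t - 1)) - ((K1*K2 - K2) choose (t - K2))"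
  define L where "L = B div F"
  define Zm where "Zm = (\<lambda>k1. {1..N} \<times> {j\<in>{1..F}. G k1 \<subseteq> r j})"
  define Zu where "Zu = (\<lambda>(k1,k2). {1..N} \<times> {j\<in>{1..F}. (k1,k2) \<in> r j \<and> \<not> G k1 \<subseteq> r j})"
  define enc where "enc = (\<lambda>(d::nat\<times>nat\<Rightarrow>nat) W. map (\<lambda>i. unvec L (\<Sum>v\<in>As i. vec (packet L W (d v) (inv_into {1..F} r (As i - {v}))))) [0..<card Atp])"
  define mir where "mir = (\<lambda>k1 (d::nat\<times>nat\<Rightarrow>nat) X (C::nat\<times>nat\<Rightarrow>bool list). map (\<lambda>i. unvec L (vec (X ! inv_into {0..<card Atp} As (ak k1 i))
              - (\<Sum>v\<in>{v\<in>ak k1 i. G k1 \<subseteq> ak k1 i - {v}}. vec (C (d v, inv_into {1..F} r (ak k1 i - {v})))))) [0..<card (Ak k1)]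
           @ map (\<lambda>i. unvec L (vec (C (d (fst (bk k1 i)), inv_into {1..F} r (snd (bk k1 i)))))) [0..<card (Bk k1)])"
  define dec where "dec = (\<lambda>(k1,k2) (d::nat\<times>nat\<Rightarrow>nat) Y (C::nat\<times>nat\<Rightarrow>bool list). concat (map (\<lambda>f.
              if (k1,k2) \<in> r f \<and> \<not> G k1 \<subseteq> r f then C (d (k1,k2), f)
              else if G k1 \<subseteq> r f then Y ! (card (Ak k1) + inv_into {0..<card (Bk k1)} (bk k1) ((k1,k2), r f))
              else unvec L (vec (Y ! inv_into {0..<card (Ak k1)} (ak k1) (insert (k1,k2) (r f)))
                 - (\<Sum>v\<in>{v\<in>insert (k1,k2) (r f) - {(k1,k2)}. \<not> G k1 \<subseteq> insert (k1,k2) (r f) - {v}}.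
                      vec (C (d v, inv_into {1..F} r (insert (k1,k2) (r f) - {v})))))) [1..<F+1]))"
  define Sd where "Sd = (\<lambda>d::nat\<times>nat\<Rightarrow>nat. card Atp)"
  define Sk where "Sk = (\<lambda>k1 (d::nat\<times>nat\<Rightarrow>nat). card (Ak k1) + card (Bk k1))"
  define D where "D = demands K1 K2 N"
  have rb: "bij_betw r {1..F} Rows" using r by (simp add: F_def)
  have Fpos: "0 < F" unfolding F_def using tK by simp
  have BFL: "B = F * L" using Bd by (simp add: F_def L_def)
  have Dne: "D \<noteq> {}"
  proof -
    have "0 < K1 * K2" using K1pos K2pos by simp
    then have "1 \<le> N" using N by linarith
    then have "restrict (\<lambda>_. 1) ({1..K1} \<times> {1..K2}) \<in> D"
      unfolding D_def demands_def by (auto simp: PiE_iff)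
    then show ?thesis by blast
  qed
  have Zm_card: "card (Zm k1) = N * Z1" if "k1 \<in> {1..K1}" for k1
    using bij_count[OF rb, of "\<lambda>T. G k1 \<subseteq> T"] cardZ1[OF that]
    by (simp add: Zm_def card_cartesian_product Z1_def)
  have Zu_card: "card (Zu (k1,k2)) = N * Z2" if "k1 \<in> {1..K1}" "k2 \<in> {1..K2}" for k1 k2
  proof -
    have "(k1,k2) \<in> G k1" using that by (simp add: G_def)
    then show ?thesis using bij_count[OF rb, of "\<lambda>T. (k1,k2) \<in> T \<and> \<not> G k1 \<subseteq> T"] cardZ2[OF that(1)]
      by (simp add: Zu_def card_cartesian_product Z2_def)
  qed
  have Z12: "(K1*K2 - 1) choose (t - 1) = Z1 + Z2"
  proof -
    have "(1::nat,1::nat) \<in> G 1" using K2pos by (simp add: G_def)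
    then have "Z1 \<le> (K1*K2 - 1) choose (t - 1)" unfolding Z1_def using Z1_le[of 1 "(1,1)"] K1pos by simp
    then show ?thesis by (simp add: Z2_def Z1_def)
  qed
  have M2eq: "real N * (real t / real (K1 * K2) - real Z1 / real F) = real N * (real Z2 / real F)"
    using binom_t Z12 unfolding F_def by (simp add: add_divide_distrib)
  have c1: "\<forall>k1\<in>{1..K1}. Zm k1 \<subseteq> {1..N} \<times> {1..F} \<and>
          real (card (Zm k1)) * (real B / real F) \<le> real N * (real Z1 / real F) * real B"
  proof
    fix k1 assume k1: "k1 \<in> {1..K1}"
    have "real (card (Zm k1)) * (real B / real F) = real N * (real Z1 / real F) * real B"
      using Zm_card[OF k1] by simp
    then show "Zm k1 \<subseteq> {1..N} \<times> {1..F} \<and>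
          real (card (Zm k1)) * (real B / real F) \<le> real N * (real Z1 / real F) * real B"
      by (auto simp: Zm_def)
  qed
  have c2: "\<forall>k1\<in>{1..K1}. \<forall>k2\<in>{1..K2}. Zu (k1, k2) \<subseteq> {1..N} \<times> {1..F} \<and>
          real (card (Zu (k1, k2))) * (real B / real F) \<le> real N * (real t / real (K1 * K2) - real Z1 / real F) * real B"
  proof (intro ballI)
    fix k1 k2 assume k: "k1 \<in> {1..K1}" "k2 \<in> {1..K2}"
    have "real (card (Zu (k1,k2))) * (real B / real F) = real N * (real Z2 / real F) * real B"
      using Zu_card[OF k] by simp
    then show "Zu (k1, k2) \<subseteq> {1..N} \<times> {1..F} \<and>
          real (card (Zu (k1, k2))) * (real B / real F) \<le> real N * (real t / real (K1 * K2) - real Z1 / real F) * real B"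
      using M2eq by (auto simp: Zu_def)
  qed
  have c3: "\<forall>d\<in>D. \<forall>W. valid_files N B W \<longrightarrow>
          length (enc d W) = Sd d \<and> (\<forall>x\<in>set (enc d W). length x = L)"
    by (auto simp: enc_def Sd_def)
  have c4: "\<forall>d\<in>D. \<forall>W. \<forall>k1\<in>{1..K1}. valid_files N B W \<longrightarrow>
          length (mir k1 d (enc d W) (cache_of L (Zm k1) W)) = Sk k1 d \<and>
          (\<forall>x\<in>set (mir k1 d (enc d W) (cache_of L (Zm k1) W)). length x = L)"
    by (auto simp: mir_def Sk_def)
  have c5: "\<forall>d\<in>D. \<forall>W. \<forall>k1\<in>{1..K1}. \<forall>k2\<in>{1..K2}. valid_files N B W \<longrightarrow>
          dec (k1, k2) d (mir k1 d (enc d W) (cache_of L (Zm k1) W)) (cache_of L (Zu (k1, k2)) W)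
            = W (d (k1, k2))"
  proof (intro ballI allI impI)
    fix d W k1 k2 assume d: "d \<in> D" and k1: "k1 \<in> {1..K1}" and k2: "k2 \<in> {1..K2}" and W: "valid_files N B W"
    have lenW: "n \<in> {1..N} \<Longrightarrow> length (W n) = F * L" for n using W BFL by (simp add: valid_files_def)
    have dv: "v \<in> U \<Longrightarrow> d v \<in> {1..N}" for v using d by (auto simp: D_def demands_def U_def PiE_iff)
    show "dec (k1, k2) d (mir k1 d (enc d W) (cache_of L (Zm k1) W)) (cache_of L (Zu (k1, k2)) W) = W (d (k1, k2))"
      unfolding Zm_def Zu_def enc_def mir_def dec_def by (rule decode[OF rb F_def As ak bk lenW dv k1 k2])
  qed
  have c6: "((real (K1 * K2) - real t) / (real t + 1)) = Max ((\<lambda>d. real (Sd d) / real F) ` D)"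
  proof -
    have "(\<lambda>d. real (Sd d) / real F) ` D = {real (card Atp) / real F}" using Dne by (auto simp: Sd_def)
    then show ?thesis using binom_rate cardAtp by (simp add: F_def)
  qed
  define c where "c = ((K1 * K2) choose Suc t) - ((K1 * K2 - K2) choose Suc t) + K2 * Z1"
  have Skc: "k1 \<in> {1..K1} \<Longrightarrow> Sk k1 d = c" for k1 d
    using cardAk cardBk by (simp add: Sk_def c_def Z1_def)
  have c7: "((real (K1 * K2) - real t) / (real t + 1)
                   - real ((K1 * K2 - K2) choose (t + 1)) / real F
                   + real K2 * real Z1 / real F) = Max ((\<lambda>(k1, d). real (Sk k1 d) / real F) ` ({1..K1} \<times> D))"
  proof -
    have "(\<lambda>(k1, d). real (Sk k1 d) / real F) ` ({1..K1} \<times> D) = {real c / real F}"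
    proof
      show "(\<lambda>(k1, d). real (Sk k1 d) / real F) ` ({1..K1} \<times> D) \<subseteq> {real c / real F}"
        using Skc by auto
      obtain d0 where d0: "d0 \<in> D" using Dne by blast
      have m: "(1, d0) \<in> {1..K1} \<times> D" using K1pos d0 by simp
      have "real c / real F = (\<lambda>(k1, d). real (Sk k1 d) / real F) (1, d0)" using Skc[of 1 d0] K1pos by simp
      then show "{real c / real F} \<subseteq> (\<lambda>(k1, d). real (Sk k1 d) / real F) ` ({1..K1} \<times> D)"
        using m by blast
    qed
    moreover have le: "(K1 * K2 - K2) choose Suc t \<le> (K1 * K2) choose Suc t" by (rule binomial_right_mono) simp
    ultimately show ?thesis using binom_rate
      by (simp add: c_def F_def of_nat_diff add_divide_distrib diff_divide_distrib)
  qed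
  have "hier_scheme K1 K2 (real N * (real Z1 / real F)) (real N * (real t / real (K1 * K2) - real Z1 / real F))
                 N F B Zm Zu enc Sd mir Sk dec
                 ((real (K1 * K2) - real t) / (real t + 1))
                 ((real (K1 * K2) - real t) / (real t + 1)
                   - real ((K1 * K2 - K2) choose (t + 1)) / real F
                   + real K2 * real Z1 / real F)"
    unfolding hier_scheme_def Let_def L_def[symmetric] D_def[symmetric]
    using Fpos Bd c1 c2 c3 c4 c5 c6 c7 unfolding F_def by blast
  then show ?thesis unfolding F_def Z1_def by blast
qed

end

theorem theorem2:
  fixes K1 K2 t :: nat
  assumes "0 < K1" and "0 < K2" and "0 < t" and "K2 < t" and "t < K1 * K2"
  defines "F \<equiv> (K1 * K2) choose t"
      and "Z1 \<equiv> (K1 * K2 - K2) choose (t - K2)"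
      and "Z2 \<equiv> ((K1 * K2 - 1) choose (t - 1)) - ((K1 * K2 - K2) choose (t - K2))"
  shows "(\<exists>Sm S P0 P. hpda K1 K2 F Z1 Z2 Sm S P0 P \<and>
            int (card (\<Union>k1\<in>{1..K1}. S k1)) - int (card Sm) = int ((K1 * K2) choose (t + 1)) \<and>
            (\<forall>k1\<in>{1..K1}. int (card (S k1)) =
               int ((K1 * K2) choose (t + 1)) - int ((K1 * K2 - K2) choose (t + 1))
               + int K2 * int ((K1 * K2 - K2) choose (t - K2))))
       \<and> (\<forall>N B. K1 * K2 \<le> N \<longrightarrow> F dvd B \<longrightarrow>
            (\<exists>Zm Zu enc Sd mir Sk dec.
               hier_scheme K1 K2
                 (real N * (real Z1 / real F))
                 (real N * (real t / real (K1 * K2) - real Z1 / real F))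
                 N F B Zm Zu enc Sd mir Sk dec
                 ((real (K1 * K2) - real t) / (real t + 1))
                 ((real (K1 * K2) - real t) / (real t + 1)
                   - real ((K1 * K2 - K2) choose (t + 1)) / real F
                   + real K2 * real Z1 / real F)))"
proof -
  interpret hsetup K1 K2 t using assms by unfold_locales
  obtain r where r: "bij_betw r {1..(K1*K2) choose t} Rows"
    using ex_bij_betw_nat_finite_1[OF finRows] cardRows by auto
  obtain As where As: "bij_betw As {0..<card Atp} Atp" using ex_bij_betw_nat_finite[OF finAtp] by blast
  have "\<forall>k1. \<exists>h. bij_betw h {0..<card (Ak k1)} (Ak k1)" using ex_bij_betw_nat_finite finAk by blast
  then obtain ak where ak: "\<And>k1. bij_betw (ak k1) {0..<card (Ak k1)} (Ak k1)" by metis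
  have "\<forall>k1. \<exists>h. bij_betw h {0..<card (Bk k1)} (Bk k1)" using ex_bij_betw_nat_finite finBk by blast
  then obtain bk where bk: "\<And>k1. bij_betw (bk k1) {0..<card (Bk k1)} (Bk k1)" by metis
  note P1 = part1[OF r]
  have P2: "\<forall>N B. K1 * K2 \<le> N \<longrightarrow> ((K1*K2) choose t) dvd B \<longrightarrow>
            (\<exists>Zm Zu enc Sd mir Sk dec.
               hier_scheme K1 K2
                 (real N * (real ((K1 * K2 - K2) choose (t - K2)) / real ((K1 * K2) choose t)))
                 (real N * (real t / real (K1 * K2) - real ((K1 * K2 - K2) choose (t - K2)) / real ((K1 * K2) choose t)))
                 N ((K1 * K2) choose t) B Zm Zu enc Sd mir Sk dec
                 ((real (K1 * K2) - real t) / (real t + 1))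
                 ((real (K1 * K2) - real t) / (real t + 1)
                   - real ((K1 * K2 - K2) choose (t + 1)) / real ((K1 * K2) choose t)
                   + real K2 * real ((K1 * K2 - K2) choose (t - K2)) / real ((K1 * K2) choose t)))"
    using part2[OF r As ak bk] by blast
  show ?thesis unfolding F_def Z1_def Z2_def using P1 P2 by blast
qed

end
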